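(* No deterministic strategyproof mechanism for locating an obnoxious facility on $[0,1]$ has a bounded approximation ratio for the geometric mean of utilities: for every deterministic strategyproof mechanism $f$ there exist a number of agents $n$ and a profile $\mathbf x\in[0,1]^n$ with $\big(\prod_i|x_i-f(\mathbf x)|\big)^{1/n}=0$ while $\max_{z\in[0,1]}\big(\prod_i|x_i-z|\big)^{1/n}>0$.
   Context: Agents $i=1,\dots,n$ have private locations $x_i\in[0,1]$; a deterministic mechanism $f:[0,1]^n\to[0,1]$ outputs the facility location; utility $u(x_i,y)=|x_i-y|$. $f$ is strategyproof if for all $\mathbf x$, $i$, $x_i'$: $|x_i-f(\mathbf x)|\ge|x_i-f(x_i',\mathbf x_{-i})|$. The geometric-mean objective of $y$ is $\big(\prod_{i}|x_i-y|\big)^{1/n}$ (the limit $p\to0^+$ of the normalized power mean $(\frac1n\sum_i|x_i-y|^p)^{1/p}$), to be maximized. *)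

theory Defs
  imports Complex_Main
begin

definition profile :: "real list \<Rightarrow> bool" where
  "profile xs \<longleftrightarrow> set xs \<subseteq> {0..1}"

definition mechanism :: "(real list \<Rightarrow> real) \<Rightarrow> bool" where
  "mechanism f \<longleftrightarrow> (\<forall>xs. profile xs \<longrightarrow> f xs \<in> {0..1})"

definition strategyproof :: "(real list \<Rightarrow> real) \<Rightarrow> bool" where
  "strategyproof f \<longleftrightarrow>
     (\<forall>xs i x'. profile xs \<longrightarrow> i < length xs \<longrightarrow> x' \<in> {0..1} \<longrightarrow>
        \<bar>xs ! i - f xs\<bar> \<ge> \<bar>xs ! i - f (xs[i := x'])\<bar>)"

definition gm :: "real list \<Rightarrow> real \<Rightarrow> real" where
  "gm xs y = root (length xs) (\<Prod>i<length xs. \<bar>xs ! i - y\<bar>)"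

end

theory Submission
  imports Defs
begin

lemma two_val:
  fixes g :: "real \<Rightarrow> real"
  assumes rng: "\<forall>x\<in>{0..1}. g x \<in> {0..1}"
    and sp: "\<forall>x\<in>{0..1}. \<forall>x'\<in>{0..1}. \<bar>x - g x'\<bar> \<le> \<bar>x - g x\<bar>"
  shows "\<And>x. x \<in> {0..1} \<Longrightarrow> g 1 \<le> g x \<and> g x \<le> g 0"
    and "\<And>x. x \<in> {0..1} \<Longrightarrow> x < (g 0 + g 1)/2 \<Longrightarrow> g x = g 0"
    and "\<And>x. x \<in> {0..1} \<Longrightarrow> x > (g 0 + g 1)/2 \<Longrightarrow> g x = g 1"
proof -
  have b: "g 1 \<le> g x \<and> g x \<le> g 0" if "x \<in> {0..1}" for x
  proof -
    have "\<bar>0 - g x\<bar> \<le> \<bar>0 - g 0\<bar>" "\<bar>1 - g x\<bar> \<le> \<bar>1 - g 1\<bar>"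
      using sp[rule_format, of 0 x] sp[rule_format, of 1 x] that by auto
    moreover have "g x \<in> {0..1}" "g 0 \<in> {0..1}" "g 1 \<in> {0..1}" using rng that by auto
    ultimately show ?thesis by (auto simp: abs_if split: if_splits)
  qed
  then show "\<And>x. x \<in> {0..1} \<Longrightarrow> g 1 \<le> g x \<and> g x \<le> g 0" by blast
  show "g x = g 0" if "x \<in> {0..1}" "x < (g 0 + g 1)/2" for x
  proof -
    have "\<bar>x - g 0\<bar> \<le> \<bar>x - g x\<bar>" using sp that by auto
    moreover have "g 1 \<le> g x \<and> g x \<le> g 0" using b that by blast
    ultimately show ?thesis using that(2) by (auto simp: abs_if split: if_splits)
  qed
  show "g x = g 1" if "x \<in> {0..1}" "x > (g 0 + g 1)/2" for x
  proof -
    have "\<bar>x - g 1\<bar> \<le> \<bar>x - g x\<bar>" using sp that by auto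
    moreover have "g 1 \<le> g x \<and> g x \<le> g 0" using b that by blast
    ultimately show ?thesis using that(2) by (auto simp: abs_if split: if_splits)
  qed
qed

lemma hit:
  fixes f :: "real list \<Rightarrow> real"
  assumes m: "mechanism f" and s: "strategyproof f"
  shows "\<exists>x\<in>{0..1}. \<exists>y\<in>{0..1}. f [x,y] = x \<or> f [x,y] = y"
proof (rule ccontr)
  assume nh: "\<not> ?thesis"
  define F where "F x y = f [x,y]" for x y
  have rng: "F x y \<in> {0..1}" if "x \<in> {0..1}" "y \<in> {0..1}" for x y
    using m that unfolding mechanism_def profile_def F_def by auto
  have nh': "F x y \<noteq> x" "F x y \<noteq> y" if "x \<in> {0..1}" "y \<in> {0..1}" for x y
    using nh that unfolding F_def by auto
  have sprow: "\<forall>x\<in>{0..1}. \<forall>x'\<in>{0..1}. \<bar>x - F x' y\<bar> \<le> \<bar>x - F x y\<bar>"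
    if "y \<in> {0..1}" for y
  proof (intro ballI)
    fix x x' :: real assume "x \<in> {0..1}" "x' \<in> {0..1}"
    then show "\<bar>x - F x' y\<bar> \<le> \<bar>x - F x y\<bar>"
      using s that unfolding strategyproof_def profile_def F_def
      by (drule_tac x="[x,y]" in spec, drule_tac x=0 in spec, drule_tac x=x' in spec) auto
  qed
  have spcol: "\<forall>y\<in>{0..1}. \<forall>y'\<in>{0..1}. \<bar>y - F x y'\<bar> \<le> \<bar>y - F x y\<bar>"
    if "x \<in> {0..1}" for x
  proof (intro ballI)
    fix y y' :: real assume "y \<in> {0..1}" "y' \<in> {0..1}"
    then show "\<bar>y - F x y'\<bar> \<le> \<bar>y - F x y\<bar>"
      using s that unfolding strategyproof_def profile_def F_def
      by (drule_tac x="[x,y]" in spec, drule_tac x=1 in spec, drule_tac x=y' in spec) auto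
  qed
  note R = two_val[of "\<lambda>x. F x y" for y, OF _ sprow]
  note C = two_val[of "F x" for x, OF _ spcol]
  have rowb: "F 1 y \<le> F x y \<and> F x y \<le> F 0 y"
    and rowl: "x < (F 0 y + F 1 y)/2 \<Longrightarrow> F x y = F 0 y"
    and rowh: "x > (F 0 y + F 1 y)/2 \<Longrightarrow> F x y = F 1 y"
    if "x \<in> {0..1}" "y \<in> {0..1}" for x y
    using R[of y x] rng that by auto
  have colb: "F x 1 \<le> F x y \<and> F x y \<le> F x 0"
    and coll: "y < (F x 0 + F x 1)/2 \<Longrightarrow> F x y = F x 0"
    and colh: "y > (F x 0 + F x 1)/2 \<Longrightarrow> F x y = F x 1"
    if "x \<in> {0..1}" "y \<in> {0..1}" for x y
    using C[of x y] rng that by auto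
  have rowstrict: "F 1 y < F 0 y" if "y \<in> {0..1}" for y
  proof (rule ccontr)
    assume "\<not> ?thesis"
    then have e: "F 1 y = F 0 y" using rowb[of 0 y] that by auto
    have "F 0 y \<in> {0..1}" using rng that by auto
    then have "F (F 0 y) y = F 0 y" using rowb[of "F 0 y" y] e that by auto
    then show False using nh' \<open>F 0 y \<in> {0..1}\<close> that by blast
  qed
  have colstrict: "F x 1 < F x 0" if "x \<in> {0..1}" for x
  proof (rule ccontr)
    assume "\<not> ?thesis"
    then have e: "F x 1 = F x 0" using colb[of x 0] that by auto
    have "F x 0 \<in> {0..1}" using rng that by auto
    then have "F x (F x 0) = F x 0" using colb[of x "F x 0"] e that by auto
    then show False using nh' \<open>F x 0 \<in> {0..1}\<close> that by blast
  qed
  define P where "P = F 0 0"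
  define Q where "Q = F 1 0"
  define R where "R = F 0 1"
  define S where "S = F 1 1"
  have QP: "Q < P" using rowstrict[of 0] by (simp add: P_def Q_def)
  have SR: "S < R" using rowstrict[of 1] by (simp add: S_def R_def)
  have RP: "R < P" using colstrict[of 0] by (simp add: P_def R_def)
  have SQ: "S < Q" using colstrict[of 1] by (simp add: S_def Q_def)
  have rP: "P \<in> {0..1}" "Q \<in> {0..1}" "R \<in> {0..1}" "S \<in> {0..1}"
    using rng by (auto simp: P_def Q_def R_def S_def)
  define T where "T = (S + P)/2"
  define x where "x = ((R + S)/2 + T)/2"
  define y where "y = ((P + R)/2 + T)/2"
  have x01: "x \<in> {0..1}" and y01: "y \<in> {0..1}" using rP by (auto simp: x_def y_def T_def field_simps)
  have i1: "x < (P+Q)/2" "x > (R+S)/2" "y < (P+R)/2" "y > (Q+S)/2" "y > (P+S)/2" "x < (P+S)/2"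
    unfolding x_def y_def T_def using QP SR RP SQ by (auto simp: field_simps)
  have fx0: "F x 0 = P" using rowl[of x 0] x01 i1 by (simp add: P_def Q_def)
  have fx1: "F x 1 = S" using rowh[of x 1] x01 i1 by (simp add: S_def R_def)
  have f0y: "F 0 y = P" using coll[of 0 y] y01 i1 by (simp add: P_def R_def)
  have f1y: "F 1 y = S" using colh[of 1 y] y01 i1 by (simp add: S_def Q_def)
  have "F x y = S" using colh[of x y] x01 y01 fx0 fx1 i1
    by (simp add: add.commute)
  moreover have "F x y = P" using rowl[of x y] x01 y01 f0y f1y i1
    by (simp add: add.commute)
  ultimately show False using QP SQ by simp
qed

theorem theorem7:
  fixes f :: "real list \<Rightarrow> real"
  assumes "mechanism f" and "strategyproof f"
  shows "\<exists>xs. xs \<noteq> [] \<and> profile xs \<and> gm xs (f xs) = 0 \<and> (SUP z\<in>{0..1}. gm xs z) > 0"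
proof -
  obtain x y where xy: "x \<in> {0..1}" "y \<in> {0..1}" "f [x,y] = x \<or> f [x,y] = y"
    using hit[OF assms] by blast
  have lt2: "{..<2::nat} = {0,1}" by auto
  have gmeq: "gm [x,y] z = root 2 (\<bar>x - z\<bar> * \<bar>y - z\<bar>)" for z
    unfolding gm_def by (simp add: lt2 numeral_2_eq_2)
  have prof: "profile [x,y]" using xy by (auto simp: profile_def)
  have g0: "gm [x,y] (f [x,y]) = 0" using xy(3) by (auto simp: gmeq)
  obtain z where z: "z \<in> {0..1::real}" "z \<noteq> x" "z \<noteq> y"
  proof -
    show ?thesis
    proof (cases "x \<noteq> 0 \<and> y \<noteq> 0")
      case True then show ?thesis using that[of 0] by auto
    next
      case F1: False
      show ?thesis
      proof (cases "x \<noteq> 1 \<and> y \<noteq> 1")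
        case True then show ?thesis using that[of 1] by auto
      next
        case False then show ?thesis using F1 that[of "1/2"] by auto
      qed
    qed
  qed
  have gz: "gm [x,y] z > 0" using z by (simp add: gmeq)
  have bdd: "bdd_above ((\<lambda>z. gm [x,y] z) ` {0..1})"
  proof (rule bdd_aboveI2)
    fix w :: real assume w: "w \<in> {0..1}"
    have "\<bar>x - w\<bar> \<le> 1" "\<bar>y - w\<bar> \<le> 1" using w xy by auto
    then have "\<bar>x - w\<bar> * \<bar>y - w\<bar> \<le> 1" by (simp add: mult_le_one)
    then show "gm [x,y] w \<le> 1" by (simp add: gmeq)
  qed
  have "gm [x,y] z \<le> (SUP z\<in>{0..1}. gm [x,y] z)"
    using cSUP_upper[OF z(1) bdd] .
  with gz have "(SUP z\<in>{0..1}. gm [x,y] z) > 0" by linarith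
  then show ?thesis using prof g0 by blast
qed

end
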